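(* If $X\subseteq\mathbb{R}^n_\infty$ is compact, then $\mathcal{F}(X)$ is compact.
   Context: $\mathbb{R}^n_\infty$ is $\mathbb{R}^n$ with the $\ell^\infty$-metric. For $1\le i\le n$, $\Lambda_i=\{x:x_i=\|x\|_\infty\}$ and $p+\xi\Lambda_i=\{p+\xi z:z\in\Lambda_i\}$ for $\xi\in\{\pm1\}$. $\mathcal{F}(X)$ is the set of points $p\in\mathbb{R}^n$ such that $(p+\xi\Lambda_i)\cap X\ne\emptyset$ for every $i\in\{1,\dots,n\}$ and $\xi\in\{\pm1\}$. *)

theory Defs
  imports "HOL-Analysis.Analysis"
begin

definition sup_norm :: "real ^ 'n \<Rightarrow> real" where
  "sup_norm x = Max (range (\<lambda>i. \<bar>x $ i\<bar>))"

definition Lambda_cone :: "'n \<Rightarrow> (real ^ 'n) set" where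
  "Lambda_cone i = {x. x $ i = sup_norm x}"

definition shifted_cone :: "real ^ 'n \<Rightarrow> real \<Rightarrow> 'n \<Rightarrow> (real ^ 'n) set" where
  "shifted_cone p \<xi> i = {p + \<xi> *\<^sub>R z | z. z \<in> Lambda_cone i}"

definition F_set :: "(real ^ 'n::finite) set \<Rightarrow> (real ^ 'n) set" where
  "F_set X = {p. \<forall>i. \<forall>\<xi>\<in>{1, -1}. shifted_cone p \<xi> i \<inter> X \<noteq> {}}"

end

theory Submission
  imports Defs
begin

lemma cone_iff: "z \<in> Lambda_cone i \<longleftrightarrow> (\<forall>j. \<bar>z $ j\<bar> \<le> z $ i)"
proof -
  have fin: "finite (range (\<lambda>j. \<bar>z $ j\<bar>))" by simp
  show ?thesis
  proof
    assume "z \<in> Lambda_cone i"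
    then have e: "z $ i = Max (range (\<lambda>j. \<bar>z $ j\<bar>))"
      by (simp add: Lambda_cone_def sup_norm_def)
    show "\<forall>j. \<bar>z $ j\<bar> \<le> z $ i" unfolding e using fin by (auto intro: Max_ge)
  next
    assume a: "\<forall>j. \<bar>z $ j\<bar> \<le> z $ i"
    have "Max (range (\<lambda>j. \<bar>z $ j\<bar>)) \<le> z $ i" using fin a by (subst Max_le_iff) auto
    moreover have "\<bar>z $ i\<bar> \<le> Max (range (\<lambda>j. \<bar>z $ j\<bar>))" using fin by (auto intro: Max_ge)
    moreover have "z $ i \<le> \<bar>z $ i\<bar>" by simp
    ultimately have "z $ i = Max (range (\<lambda>j. \<bar>z $ j\<bar>))" by linarith
    then show "z \<in> Lambda_cone i" by (simp add: Lambda_cone_def sup_norm_def)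
  qed
qed

lemma F_iff: "p \<in> F_set X \<longleftrightarrow>
   (\<forall>i. (\<exists>x\<in>X. \<forall>j. \<bar>(x - p) $ j\<bar> \<le> (x - p) $ i) \<and> (\<exists>x\<in>X. \<forall>j. \<bar>(p - x) $ j\<bar> \<le> (p - x) $ i))"
proof -
  have a: "shifted_cone p 1 i \<inter> X \<noteq> {} \<longleftrightarrow> (\<exists>x\<in>X. \<forall>j. \<bar>(x - p) $ j\<bar> \<le> (x - p) $ i)" for i
  proof
    assume "shifted_cone p 1 i \<inter> X \<noteq> {}"
    then obtain z where "z \<in> Lambda_cone i" "p + z \<in> X" by (auto simp: shifted_cone_def)
    then show "\<exists>x\<in>X. \<forall>j. \<bar>(x - p) $ j\<bar> \<le> (x - p) $ i"
      by (intro bexI[of _ "p + z"]) (auto simp: cone_iff)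
  next
    assume "\<exists>x\<in>X. \<forall>j. \<bar>(x - p) $ j\<bar> \<le> (x - p) $ i"
    then obtain x where "x \<in> X" "x - p \<in> Lambda_cone i" by (auto simp: cone_iff)
    then show "shifted_cone p 1 i \<inter> X \<noteq> {}" unfolding shifted_cone_def
      by (auto intro!: exI[of _ x] exI[of _ "x - p"])
  qed
  have b: "shifted_cone p (-1) i \<inter> X \<noteq> {} \<longleftrightarrow> (\<exists>x\<in>X. \<forall>j. \<bar>(p - x) $ j\<bar> \<le> (p - x) $ i)" for i
  proof
    assume "shifted_cone p (-1) i \<inter> X \<noteq> {}"
    then obtain z where "z \<in> Lambda_cone i" "p - z \<in> X" by (auto simp: shifted_cone_def)
    then show "\<exists>x\<in>X. \<forall>j. \<bar>(p - x) $ j\<bar> \<le> (p - x) $ i"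
      by (intro bexI[of _ "p - z"]) (auto simp: cone_iff)
  next
    assume "\<exists>x\<in>X. \<forall>j. \<bar>(p - x) $ j\<bar> \<le> (p - x) $ i"
    then obtain x where "x \<in> X" "p - x \<in> Lambda_cone i" by (auto simp: cone_iff)
    then show "shifted_cone p (-1) i \<inter> X \<noteq> {}" unfolding shifted_cone_def
      by (auto intro!: exI[of _ x] exI[of _ "p - x"])
  qed
  show ?thesis unfolding F_set_def using a b by auto
qed

theorem proposition5p7:
  fixes X :: "(real ^ 'n::finite) set"
  assumes "compact X"
  shows "compact (F_set X)"
proof -
  define T1 where "T1 i = {q :: (real^'n) \<times> (real^'n). \<forall>j. \<bar>(fst q - snd q) $ j\<bar> \<le> (fst q - snd q) $ i}" for i
  define T2 where "T2 i = {q :: (real^'n) \<times> (real^'n). \<forall>j. \<bar>(snd q - fst q) $ j\<bar> \<le> (snd q - fst q) $ i}" for i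
  have c1: "closed (T1 i)" for i unfolding T1_def
    by (intro closed_Collect_all closed_Collect_le continuous_intros)
  have c2: "closed (T2 i)" for i unfolding T2_def
    by (intro closed_Collect_all closed_Collect_le continuous_intros)
  have eq: "F_set X = {p. \<forall>i. (\<exists>x. x \<in> X \<and> (x, p) \<in> T1 i) \<and> (\<exists>x. x \<in> X \<and> (x, p) \<in> T2 i)}"
    by (simp add: set_eq_iff F_iff T1_def T2_def Bex_def)
  have closed: "closed (F_set X)" unfolding eq
    by (intro closed_Collect_all closed_Collect_conj closed_compact_projection[OF assms] c1 c2)
  obtain M where M: "\<And>x. x \<in> X \<Longrightarrow> norm x \<le> M"
    using compact_imp_bounded[OF assms] bounded_iff by blast
  have "norm p \<le> (\<Sum>i\<in>(UNIV::'n set). M)" if "p \<in> F_set X" for p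
  proof -
    have "\<bar>p $ i\<bar> \<le> M" for i
    proof -
      from that obtain x y where x: "x \<in> X" "\<forall>j. \<bar>(x - p) $ j\<bar> \<le> (x - p) $ i"
        and y: "y \<in> X" "\<forall>j. \<bar>(p - y) $ j\<bar> \<le> (p - y) $ i" unfolding F_iff by blast
      have "p $ i \<le> x $ i" using x(2) by (auto dest: spec[of _ i])
      moreover have "y $ i \<le> p $ i" using y(2) by (auto dest: spec[of _ i])
      moreover have "\<bar>x $ i\<bar> \<le> M" using M[OF x(1)] component_le_norm_cart[of x i] by linarith
      moreover have "\<bar>y $ i\<bar> \<le> M" using M[OF y(1)] component_le_norm_cart[of y i] by linarith
      ultimately show ?thesis by linarith
    qed
    then have "(\<Sum>i\<in>UNIV. \<bar>p $ i\<bar>) \<le> (\<Sum>i\<in>(UNIV::'n set). M)"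
      by (metis sum_mono)
    then show ?thesis using norm_le_l1_cart[of p] by linarith
  qed
  then have "bounded (F_set X)" unfolding bounded_iff by blast
  with closed show ?thesis using compact_eq_bounded_closed by blast
qed

end
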